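(* Let $\mathbf{D}\in\mathbb{R}^{n\times n}$, positive integers $k_0,k_1$, hyperparameters $\lambda,\mu>0$, and bounds $\beta,\gamma>0$ be given. Let $\mathbf{E}$ be the $n\times n$ all-ones matrix. Consider the relaxation $$\begin{aligned}\text{(A)}\quad \min_{\mathbf{X}, \mathbf{Y}, \mathbf{V}, \mathbf{W}_1, \mathbf{W}_2 \in \mathbb{R}^{n \times n}} \ & \Vert\mathbf{D} - \mathbf{X} - \mathbf{Y}\Vert_F^2 + \lambda \Vert \mathbf{X} \Vert_F^2 + \mu \Vert \mathbf{Y} \Vert_F^2 \\ \text{s.t.}\ & -\mathbf{V} \leq \mathbf{Y} \leq \mathbf{V},\ \tfrac{1}{\gamma} \langle \mathbf{E}, \mathbf{V}\rangle \leq k_1,\ \tfrac{1}{2\beta} \mathrm{tr}(\mathbf{W}_1)+\tfrac{1}{2\beta}\mathrm{tr}(\mathbf{W}_2) \leq k_0,\ \begin{pmatrix}\mathbf{W}_1 & \mathbf{X}\\ \mathbf{X}^T & \mathbf{W}_2\end{pmatrix} \succeq 0,\end{aligned}$$ and the relaxation $$\begin{aligned}\text{(B)}\quad \min_{\mathbf{X}, \mathbf{Y}, \mathbf{Z}, \mathbf{P}_c, \mathbf{P}_r, \mathbf{\Theta}, \boldsymbol{\alpha} \in \mathbb{R}^{n \times n}} \ & \Vert\mathbf{D} - \mathbf{X} - \mathbf{Y}\Vert_F^2 + \lambda\, \mathrm{tr}(\mathbf{\Theta}) + \mu \langle \mathbf{E}, \boldsymbol{\alpha}\rangle \\ \text{s.t.}\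 & \mathbf{Y} \circ \mathbf{Y} \leq \boldsymbol{\alpha} \circ \mathbf{Z},\ \langle \mathbf{E}, \mathbf{Z}\rangle \leq k_1,\ \mathbf{0} \leq \mathbf{Z} \leq \mathbf{E},\ -\gamma \mathbf{Z} \leq\mathbf{Y} \leq \gamma \mathbf{Z},\\ & \mathbf{P}_c \succeq 0,\ \mathbb{I} - \mathbf{P}_c \succeq 0,\ \mathrm{tr}(\mathbf{P}_c) \leq k_0,\ \mathbf{P}_r \succeq 0,\ \mathbb{I} - \mathbf{P}_r \succeq 0,\ \mathrm{tr}(\mathbf{P}_r) \leq k_0,\\ & \begin{pmatrix}\mathbf{\Theta} & \mathbf{X}\\ \mathbf{X}^T & \mathbf{P}_c\end{pmatrix} \succeq 0,\ \begin{pmatrix}\beta\mathbf{P}_r & \mathbf{X}\\ \mathbf{X}^T & \beta\mathbf{P}_c\end{pmatrix} \succeq 0.\end{aligned}$$ For any input data $\mathbf{D}, k_0, k_1$ and hyperparameters $\lambda, \mu$, the optimal value of (B) is no less than the optimal value of (A).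
   Context: Both (A) and (B) are convex relaxations of the sparse plus low-rank problem $\min_{\mathbf{X},\mathbf{Y}} \Vert\mathbf{D}-\mathbf{X}-\mathbf{Y}\Vert_F^2+\lambda\Vert\mathbf{X}\Vert_F^2+\mu\Vert\mathbf{Y}\Vert_F^2$ s.t. $\mathrm{Rank}(\mathbf{X})\le k_0$, $\Vert\mathbf{Y}\Vert_0\le k_1$, under the additional assumptions that the spectral norm of $\mathbf{X}$ is at most $\beta$ and the entrywise $\ell_\infty$ norm of $\mathbf{Y}$ is at most $\gamma$. (A) is the relaxation of Lee and Zou, based on $\mathrm{Rank}(\mathbf{X})\ge \frac{1}{\beta}\Vert\mathbf{X}\Vert_*$ and $\Vert\mathbf{Y}\Vert_0\ge\frac{1}{\gamma}\Vert\mathbf{Y}\Vert_1$; (B) is the paper's perspective-based relaxation strengthened with these bounds. $\circ$ denotes the entrywise (Hadamard) product and inequalities between matrices are entrywise except $\succeq$, which denotes positive semidefiniteness; $\mathbb{I}$ is the identity matrix.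
   Formalization: In relaxation (B) the constraint $\mathbf{Y} \circ \mathbf{Y} \leq \boldsymbol{\alpha} \circ \mathbf{Z}$ comes with $\mathbf{0} \leq \boldsymbol{\alpha}$, so alpha is entrywise nonnegative. The statement above fails without it. *)

theory Defs
  imports "HOL-Analysis.Analysis"
begin

definition psd :: "real^'m^'m \<Rightarrow> bool" where
  "psd A \<longleftrightarrow> transpose A = A \<and> (\<forall>x. 0 \<le> x \<bullet> (A *v x))"

definition block2 :: "real^'n^'n \<Rightarrow> real^'n^'n \<Rightarrow> real^'n^'n \<Rightarrow> real^'n^'n \<Rightarrow> real^('n + 'n)^('n + 'n)" where
  "block2 A B C D = (\<chi> i j. case (i, j) of
      (Inl a, Inl b) \<Rightarrow> A $ a $ b
    | (Inl a, Inr b) \<Rightarrow> B $ a $ b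
    | (Inr a, Inl b) \<Rightarrow> C $ a $ b
    | (Inr a, Inr b) \<Rightarrow> D $ a $ b)"

definition hadamard :: "real^'n^'m \<Rightarrow> real^'n^'m \<Rightarrow> real^'n^'m" where
  "hadamard A B = (\<chi> i j. A $ i $ j * B $ i $ j)"

definition mle :: "real^'n^'m \<Rightarrow> real^'n^'m \<Rightarrow> bool" where
  "mle A B \<longleftrightarrow> (\<forall>i j. A $ i $ j \<le> B $ i $ j)"

definition ones :: "real^'n^'m" where
  "ones = (\<chi> i j. 1)"

definition finner :: "real^'n^'m \<Rightarrow> real^'n^'m \<Rightarrow> real" where
  "finner A B = (\<Sum>i\<in>UNIV. \<Sum>j\<in>UNIV. A $ i $ j * B $ i $ j)"

definition fro2 :: "real^'n^'m \<Rightarrow> real" where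
  "fro2 A = (\<Sum>i\<in>UNIV. \<Sum>j\<in>UNIV. (A $ i $ j)\<^sup>2)"

definition feasA :: "nat \<Rightarrow> nat \<Rightarrow> real \<Rightarrow> real \<Rightarrow>
    ((real^'n^'n) \<times> (real^'n^'n) \<times> (real^'n^'n) \<times> (real^'n^'n) \<times> (real^'n^'n)) set" where
  "feasA k0 k1 \<beta> \<gamma> = {(X, Y, V, W1, W2).
      mle (- V) Y \<and> mle Y V \<and>
      (1 / \<gamma>) * finner ones V \<le> real k1 \<and>
      (1 / (2 * \<beta>)) * trace W1 + (1 / (2 * \<beta>)) * trace W2 \<le> real k0 \<and>
      psd (block2 W1 X (transpose X) W2)}"

definition objA :: "real^'n^'n \<Rightarrow> real \<Rightarrow> real \<Rightarrow>
    ((real^'n^'n) \<times> (real^'n^'n) \<times> (real^'n^'n) \<times> (real^'n^'n) \<times> (real^'n^'n)) \<Rightarrow> real" where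
  "objA D lam mu = (\<lambda>(X, Y, V, W1, W2). fro2 (D - X - Y) + lam * fro2 X + mu * fro2 Y)"

(* The perspective constraint Y o Y <= alpha o Z is read as the rotated
   second-order cone constraint, which includes alpha >= 0. *)
definition feasB :: "nat \<Rightarrow> nat \<Rightarrow> real \<Rightarrow> real \<Rightarrow>
    ((real^'n^'n) \<times> (real^'n^'n) \<times> (real^'n^'n) \<times> (real^'n^'n) \<times> (real^'n^'n) \<times> (real^'n^'n) \<times> (real^'n^'n)) set" where
  "feasB k0 k1 \<beta> \<gamma> = {(X, Y, Z, Pc, Pr, \<Theta>, \<alpha>).
      mle (hadamard Y Y) (hadamard \<alpha> Z) \<and> mle 0 \<alpha> \<and>
      finner ones Z \<le> real k1 \<and> mle 0 Z \<and> mle Z ones \<and>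
      mle (- (\<gamma> *\<^sub>R Z)) Y \<and> mle Y (\<gamma> *\<^sub>R Z) \<and>
      psd Pc \<and> psd (mat 1 - Pc) \<and> trace Pc \<le> real k0 \<and>
      psd Pr \<and> psd (mat 1 - Pr) \<and> trace Pr \<le> real k0 \<and>
      psd (block2 \<Theta> X (transpose X) Pc) \<and>
      psd (block2 (\<beta> *\<^sub>R Pr) X (transpose X) (\<beta> *\<^sub>R Pc))}"

definition objB :: "real^'n^'n \<Rightarrow> real \<Rightarrow> real \<Rightarrow>
    ((real^'n^'n) \<times> (real^'n^'n) \<times> (real^'n^'n) \<times> (real^'n^'n) \<times> (real^'n^'n) \<times> (real^'n^'n) \<times> (real^'n^'n)) \<Rightarrow> real" where
  "objB D lam mu = (\<lambda>(X, Y, Z, Pc, Pr, \<Theta>, \<alpha>).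
      fro2 (D - X - Y) + lam * trace \<Theta> + mu * finner ones \<alpha>)"

end

theory Submission imports Defs begin

definition vcomb :: "real^'n \<Rightarrow> real^'n \<Rightarrow> real^('n+'n)" where
  "vcomb u w = (\<chi> k. case k of Inl a \<Rightarrow> u$a | Inr b \<Rightarrow> w$b)"

lemma sum_plus_univ: "(\<Sum>k\<in>(UNIV::('n::finite+'n) set). g k) = (\<Sum>a\<in>UNIV. g (Inl a)) + (\<Sum>b\<in>UNIV. g (Inr b))"
  by (subst UNIV_Plus_UNIV[symmetric], subst sum.Plus) auto

lemma block_form:
  "vcomb u w \<bullet> (block2 A B C D *v vcomb u w) =
   u \<bullet> (A *v u) + u \<bullet> (B *v w) + w \<bullet> (C *v u) + w \<bullet> (D *v w)"
  unfolding inner_vec_def matrix_vector_mult_def vcomb_def block2_def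
  by (simp add: sum_plus_univ distrib_left sum.distrib)

lemma diag_bound:
  fixes T X P :: "real^'n^'n"
  assumes "psd (block2 T X (transpose X) P)" "psd (mat 1 - P)"
  shows "(\<Sum>j\<in>UNIV. (X$i$j)\<^sup>2) \<le> T$i$i"
proof -
  define u :: "real^'n" where "u = axis i 1"
  define w :: "real^'n" where "w = (\<chi> j. - X$i$j)"
  have q: "0 \<le> vcomb u w \<bullet> (block2 T X (transpose X) P *v vcomb u w)"
    using assms(1) unfolding psd_def by blast
  have p: "0 \<le> w \<bullet> ((mat 1 - P) *v w)"
    using assms(2) unfolding psd_def by blast
  have e1: "u \<bullet> (T *v u) = T$i$i"
    unfolding u_def inner_vec_def matrix_vector_mult_def axis_def
    by (simp add: mult.commute[of "T $ _ $ _"] if_distrib[of "\<lambda>a. a * y" for y] cong: if_cong)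
  have e2: "u \<bullet> (X *v w) = - (\<Sum>j\<in>UNIV. (X$i$j)\<^sup>2)"
    unfolding u_def w_def inner_vec_def matrix_vector_mult_def axis_def
    by (simp add: if_distrib[of "\<lambda>a. a * y" for y] power2_eq_square sum_negf cong: if_cong)
  have e3: "w \<bullet> (transpose X *v u) = - (\<Sum>j\<in>UNIV. (X$i$j)\<^sup>2)"
    unfolding u_def w_def inner_vec_def matrix_vector_mult_def axis_def transpose_def
    by (simp add: if_distrib[of "\<lambda>a. y * a" for y] power2_eq_square sum_negf cong: if_cong)
  have e4: "w \<bullet> ((mat 1 - P) *v w) = (\<Sum>j\<in>UNIV. (X$i$j)\<^sup>2) - w \<bullet> (P *v w)"
  proof -
    have "w \<bullet> ((mat 1 - P) *v w) = w \<bullet> w - w \<bullet> (P *v w)"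
      by (simp add: matrix_vector_mult_diff_rdistrib inner_diff_right)
    moreover have "w \<bullet> w = (\<Sum>j\<in>UNIV. (X$i$j)\<^sup>2)"
      unfolding w_def inner_vec_def by (simp add: power2_eq_square)
    ultimately show ?thesis by simp
  qed
  show ?thesis using q p e1 e2 e3 e4 block_form[of u w T X "transpose X" P] by linarith
qed

lemma psd_block_zero: "psd (block2 (0::real^'n^'n) 0 (transpose 0) 0)"
proof -
  have "block2 (0::real^'n^'n) 0 (transpose 0) 0 = 0"
    unfolding block2_def by (simp add: vec_eq_iff transpose_def split: sum.split)
  moreover have "psd (0::real^('n+'n)^('n+'n))" unfolding psd_def by (simp add: transpose_def vec_eq_iff)
  ultimately show ?thesis by simp
qed

lemma psd_zero: "psd (0::real^'n^'n)"
  unfolding psd_def by (simp add: transpose_def vec_eq_iff)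

lemma psd_id: "psd (mat 1::real^'n^'n)"
  unfolding psd_def by (simp add: transpose_mat)

theorem proposition11:
  fixes D :: "real^'n^'n"
    and k0 k1 :: nat
    and lam mu \<beta> \<gamma> :: real
  assumes "0 < k0" and "0 < k1"
    and "0 < lam" and "0 < mu"
    and "0 < \<beta>" and "0 < \<gamma>"
  shows "(INF p \<in> feasB k0 k1 \<beta> \<gamma>. objB D lam mu p)
           \<ge> (INF q \<in> feasA k0 k1 \<beta> \<gamma>. objA D lam mu q)"
proof (rule cInf_greatest)
  have "(0,0,0,0,0,0,0) \<in> feasB k0 k1 \<beta> \<gamma>"
    unfolding feasB_def using psd_block_zero psd_zero psd_id
    by (simp add: mle_def hadamard_def finner_def ones_def trace_def)
  then show "objB D lam mu ` feasB k0 k1 \<beta> \<gamma> \<noteq> {}" by blast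
next
  fix b assume "b \<in> objB D lam mu ` feasB k0 k1 \<beta> \<gamma>"
  then obtain X Y Z Pc Pr \<Theta> \<alpha> where pB: "(X, Y, Z, Pc, Pr, \<Theta>, \<alpha>) \<in> feasB k0 k1 \<beta> \<gamma>"
    and b: "b = objB D lam mu (X, Y, Z, Pc, Pr, \<Theta>, \<alpha>)" by auto
  note F = pB[unfolded feasB_def, simplified]
  let ?q = "(X, Y, \<gamma> *\<^sub>R Z, \<beta> *\<^sub>R Pr, \<beta> *\<^sub>R Pc)"
  have trs: "trace (c *\<^sub>R M) = c * trace M" for c and M :: "real^'n^'n"
    by (simp add: trace_def sum_distrib_left)
  have fis: "finner ones (c *\<^sub>R M) = c * finner ones M" for c and M :: "real^'n^'n"
    by (simp add: finner_def sum_distrib_left mult.left_commute)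
  have qA: "?q \<in> feasA k0 k1 \<beta> \<gamma>"
  proof -
    have "(1 / \<gamma>) * finner ones (\<gamma> *\<^sub>R Z) \<le> real k1"
      using F assms by (simp add: fis)
    moreover have "(1 / (2 * \<beta>)) * trace (\<beta> *\<^sub>R Pr) + (1 / (2 * \<beta>)) * trace (\<beta> *\<^sub>R Pc) \<le> real k0"
      using F assms by (simp add: trs field_simps)
    moreover have "mle (- (\<gamma> *\<^sub>R Z)) Y" "mle Y (\<gamma> *\<^sub>R Z)" using F by auto
    ultimately show ?thesis using F unfolding feasA_def by simp
  qed
  have fX: "fro2 X \<le> trace \<Theta>"
    unfolding fro2_def trace_def
    by (rule sum_mono, rule diag_bound) (use F in auto)
  have fY: "fro2 Y \<le> finner ones \<alpha>"
    unfolding fro2_def finner_def ones_def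
  proof (intro sum_mono)
    fix i j
    have h: "Y$i$j * Y$i$j \<le> \<alpha>$i$j * Z$i$j" using F by (simp add: mle_def hadamard_def)
    have a: "0 \<le> \<alpha>$i$j" "Z$i$j \<le> 1" using F by (auto simp: mle_def ones_def)
    have "\<alpha>$i$j * Z$i$j \<le> \<alpha>$i$j" using mult_left_mono[OF a(2) a(1)] by simp
    then show "(Y$i$j)\<^sup>2 \<le> (\<chi> i j. 1) $ i $ j * \<alpha>$i$j" using h by (simp add: power2_eq_square)
  qed
  have le: "objA D lam mu ?q \<le> b"
    unfolding b objA_def objB_def using fX fY assms
    by (simp add: add_mono mult_left_mono)
  have bdd: "bdd_below (objA D lam mu ` feasA k0 k1 \<beta> \<gamma>)"
  proof (rule bdd_belowI[of _ 0], clarify)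
    fix X Y V W1 W2 :: "real^'n^'n"
    show "0 \<le> objA D lam mu (X, Y, V, W1, W2)"
      unfolding objA_def fro2_def using assms by (simp add: sum_nonneg)
  qed
  have "(INF q \<in> feasA k0 k1 \<beta> \<gamma>. objA D lam mu q) \<le> objA D lam mu ?q"
    by (rule cInf_lower[OF imageI[OF qA] bdd])
  then show "(INF q \<in> feasA k0 k1 \<beta> \<gamma>. objA D lam mu q) \<le> b" using le by linarith
qed

end
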